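(* Let $k$ be a totally real number field, $\chi(x)\in\mathcal{O}_k[x]$ an irreducible monic polynomial of prime degree $n$ such that $K=k[x]/(\chi(x))$ is totally real, $X$ the $k$-variety of $n\times n$ matrices with characteristic polynomial $\chi$, $x_0\in X(\mathcal{O}_k)$, and $S:=\mathrm{S}_{x_0,k_v}$ the centralizer of $x_0$ in $\mathrm{SL}_{n,k_v}$, where $v$ is a non-archimedean place such that $K_v=K\otimes_kk_v$ is an unramified field extension of $k_v$. Let $\xi\in\mathrm{Br}\,X$ be such that $\tilde\xi_v$ is not identically $1$ on $X(k_v)$, and let $\kappa=\kappa_{\tilde\xi_v}\in\mathrm{Hom}(X_*(S),\mathbb{C}^\times)$ be as in the context. Then $S$ is an endoscopic group of $\mathrm{SL}_{n,k_v}$ associated with $\kappa$: namely, identifying $X_*(S)\cong\{(z_1,\dots,z_n)\in\mathbb{Z}^n:\sum z_i=0\}$ with coroots $\Phi^\vee=\{e_i-e_j: i\neq j\}$ of $\mathrm{SL}_n$ relative to the maximal torus $S$ and Weyl group $W\cong S_n$ acting by permutations, and letting $\sigma_S$ be the automorphism induced by the Frobenius of $\mathrm{Gal}(K_v/k_v)$ (so $\sigma_{\mathrm{SL}_n}=\mathrm{id}$ since $\mathrm{SL}_n$ is split), there is $w\in W$ with $\sigma_S=w\circ\sigma_{\mathrm{SL}_n}$, one has $\sigma_S(\kappa)=\kappa$, and $\{\alpha\in\Phi^\vee:\kappa(\alpha)=1\}=\emptyset$, so that $(X^*(S),X_*(S),\emptyset,\emptyset,\sigma_S)$ — the root datum classifying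 the unramified torus $S$ — is the root datum of an endoscopic group of $\mathrm{SL}_{n,k_v}$ attached to $(\kappa,\sigma_S)$.
   Context: $\mathrm{Br}\,X=\mathrm{H}^2_{\acute et}(X,\mathbb{G}_m)$; for $x\in X(k_v)$, $\xi_v(x)=\exp(2\pi i\,\mathrm{inv}_v(x^*\xi))$ and $\tilde\xi_v(x)=\xi_v(x)/\xi_v(x_0)$. Let $\delta:X(k_v)\to\mathrm{H}^1(k_v,S)$ be the (surjective) connecting map of $1\to S\to\mathrm{SL}_{n,k_v}\to X_{k_v}\to1$; the character $\kappa_{\tilde\xi_v}$ of $\mathrm{H}^1(k_v,S)$ is defined by $\kappa_{\tilde\xi_v}(\delta(x))=\tilde\xi_v(x)$. With $\Lambda_v=\mathrm{Gal}(K_v/k_v)$ (cyclic of order $n$, acting on $X_*(S)$ by cyclic permutation of coordinates) and $I_{\Lambda_v}$ its augmentation ideal, the Tate–Nakayama isomorphism gives a surjection $X_*(S)\to X_*(S)/I_{\Lambda_v}X_*(S)\cong\mathrm{H}^1(k_v,S)$; pulling $\kappa_{\tilde\xi_v}$ back along it gives an element of $\mathrm{Hom}(X_*(S),\mathbb{C}^\times)$, also denoted $\kappa_{\tilde\xi_v}$. An unramified reductive group over $k_v$ (quasi-split, split over an unramified extension) is classified by a datum $(X^*(T),X_*(T),\Phi,\Phi^\vee,\sigma)$ with $\sigma$ induced by Frobenius. An unramified reductive $H$ is an endoscopic group of $G$ (datum $(X^*(T),X_*(T),\Phi_G,\Phi_G^\vee,\sigma_G)$) if its datum is $(X^*(T),X_*(T),\Phi_H,\Phi_H^\vee,\sigma_H)$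 with some $\kappa\in\mathrm{Hom}(X_*(T),\mathbb{C}^\times)$ and $w\in W(\Phi_G)$ such that $\sigma_H=w\circ\sigma_G$, $\sigma_H(\kappa)=\kappa$, and $\Phi_H^\vee=\{\alpha\in\Phi_G^\vee:\kappa(\alpha)=1\}$. *)

theory Defs
  imports Complex_Main "HOL-Combinatorics.Permutations" "HOL-Computational_Algebra.Primes"
begin

text \<open>Combinatorial model of the cocharacter lattice of the norm-one torus
S = ker(N : R_{K_v/k_v} G_m -> G_m) for a cyclic unramified extension K_v/k_v of
prime degree n, inside SL_n.\<close>

definition cochar_lattice :: "nat \<Rightarrow> (nat \<Rightarrow> int) set" where
  "cochar_lattice n = {z. (\<forall>i\<ge>n. z i = 0) \<and> (\<Sum>i<n. z i) = 0}"

definition basis_vec :: "nat \<Rightarrow> nat \<Rightarrow> int" where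
  "basis_vec i = (\<lambda>j. if j = i then 1 else 0)"

definition coroots :: "nat \<Rightarrow> (nat \<Rightarrow> int) set" where
  "coroots n = {(\<lambda>k. basis_vec i k - basis_vec j k) | i j. i < n \<and> j < n \<and> i \<noteq> j}"

text \<open>Action of a generator of Gal(K_v/k_v) (cyclic of order n) on X_*(S):
cyclic permutation of coordinates by r steps, r coprime to n.\<close>
definition cyc_shift :: "nat \<Rightarrow> nat \<Rightarrow> (nat \<Rightarrow> int) \<Rightarrow> (nat \<Rightarrow> int)" where
  "cyc_shift n r z = (\<lambda>i. if i < n then z ((i + r) mod n) else 0)"

definition is_character :: "nat \<Rightarrow> ((nat \<Rightarrow> int) \<Rightarrow> complex) \<Rightarrow> bool" where
  "is_character n \<kappa> \<longleftrightarrow> (\<forall>z\<in>cochar_lattice n. \<kappa> z \<noteq> 0) \<and>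
     (\<forall>z\<in>cochar_lattice n. \<forall>z'\<in>cochar_lattice n. \<kappa> (\<lambda>i. z i + z' i) = \<kappa> z * \<kappa> z')"

end

theory Submission
  imports Defs "HOL-Number_Theory.Cong"
begin

definition vv :: "nat \<Rightarrow> nat \<Rightarrow> nat \<Rightarrow> int" where
  "vv c e = (\<lambda>k. basis_vec c k - basis_vec e k)"

lemma L_add: "z \<in> cochar_lattice n \<Longrightarrow> z' \<in> cochar_lattice n \<Longrightarrow> (\<lambda>i. z i + z' i) \<in> cochar_lattice n"
  by (simp add: cochar_lattice_def sum.distrib)

lemma L_neg: "z \<in> cochar_lattice n \<Longrightarrow> (\<lambda>i. - z i) \<in> cochar_lattice n"
  by (simp add: cochar_lattice_def sum_negf)

lemma L_smul: "z \<in> cochar_lattice n \<Longrightarrow> (\<lambda>i. m * z i) \<in> cochar_lattice n"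
  by (simp add: cochar_lattice_def sum_distrib_left[symmetric])

lemma L_zero: "(\<lambda>i. 0) \<in> cochar_lattice n"
  by (simp add: cochar_lattice_def)

lemma vv_L: "c < n \<Longrightarrow> e < n \<Longrightarrow> vv c e \<in> cochar_lattice n"
  by (simp add: cochar_lattice_def vv_def basis_vec_def sum_subtractf)

lemma kmult: "is_character n \<kappa> \<Longrightarrow> z \<in> cochar_lattice n \<Longrightarrow> z' \<in> cochar_lattice n
  \<Longrightarrow> \<kappa> (\<lambda>i. z i + z' i) = \<kappa> z * \<kappa> z'"
  by (simp add: is_character_def)

lemma kappa_zero: assumes "is_character n \<kappa>" shows "\<kappa> (\<lambda>i. 0) = 1"
proof -
  have "\<kappa> (\<lambda>i. 0 + 0) = \<kappa> (\<lambda>i. 0) * \<kappa> (\<lambda>i. 0)"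
    using kmult[OF assms L_zero L_zero] .
  moreover have "\<kappa> (\<lambda>i. 0) \<noteq> 0" using assms L_zero unfolding is_character_def by blast
  ultimately show ?thesis by simp
qed

lemma kappa_add1: assumes "is_character n \<kappa>" "z \<in> cochar_lattice n" "z' \<in> cochar_lattice n"
  "\<kappa> z = 1" "\<kappa> z' = 1" shows "\<kappa> (\<lambda>i. z i + z' i) = 1"
  using assms unfolding is_character_def by simp

lemma kappa_neg1: assumes "is_character n \<kappa>" "z \<in> cochar_lattice n" "\<kappa> z = 1"
  shows "\<kappa> (\<lambda>i. - z i) = 1"
proof -
  have "\<kappa> (\<lambda>i. - z i + z i) = \<kappa> (\<lambda>i. - z i) * \<kappa> z"
    using kmult[OF assms(1) L_neg[OF assms(2)] assms(2)] .
  then show ?thesis using kappa_zero[OF assms(1)] assms(3) by simp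
qed

lemma kappa_smul1: assumes "is_character n \<kappa>" "z \<in> cochar_lattice n" "\<kappa> z = 1"
  shows "\<kappa> (\<lambda>i. m * z i) = 1"
proof (induction m rule: int_induct[where k=0])
  case base
  then show ?case using kappa_zero[OF assms(1)] by simp
next
  case (step1 i)
  have "\<kappa> (\<lambda>k. i * z k + z k) = 1"
    using kappa_add1[OF assms(1) L_smul[OF assms(2)] assms(2) step1(2) assms(3)] .
  then show ?case by (simp add: algebra_simps)
next
  case (step2 i)
  have "\<kappa> (\<lambda>k. i * z k + - z k) = 1"
    using kappa_add1[OF assms(1) L_smul[OF assms(2)] L_neg[OF assms(2)] step2(2)
        kappa_neg1[OF assms]] .
  then show ?case by (simp add: algebra_simps)
qed

lemma kappa_sum1: assumes "is_character n \<kappa>" "\<forall>c<n. \<kappa> (vv c 0) = 1" "0 < n"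
  shows "finite A \<Longrightarrow> A \<subseteq> {..<n} \<Longrightarrow>
    (\<lambda>i. \<Sum>c\<in>A. f c * vv c 0 i) \<in> cochar_lattice n \<and> \<kappa> (\<lambda>i. \<Sum>c\<in>A. f c * vv c 0 i) = 1"
proof (induction A rule: finite_induct)
  case empty
  then show ?case using kappa_zero[OF assms(1)] L_zero by simp
next
  case (insert x F)
  have x: "x < n" using insert by auto
  have m: "(\<lambda>i. f x * vv x 0 i) \<in> cochar_lattice n" using L_smul vv_L x assms(3) by blast
  have k: "\<kappa> (\<lambda>i. f x * vv x 0 i) = 1"
    using kappa_smul1[OF assms(1) vv_L[OF x assms(3)]] assms(2) x by blast
  have IH: "(\<lambda>i. \<Sum>c\<in>F. f c * vv c 0 i) \<in> cochar_lattice n"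
    "\<kappa> (\<lambda>i. \<Sum>c\<in>F. f c * vv c 0 i) = 1" using insert by auto
  show ?case using L_add[OF m IH(1)] kappa_add1[OF assms(1) m IH(1) k IH(2)] insert(1,2)
    by simp
qed

lemma decomp: assumes "z \<in> cochar_lattice n" "0 < n"
  shows "z = (\<lambda>i. \<Sum>c\<in>{..<n}. z c * vv c 0 i)"
proof
  fix i
  have s: "(\<Sum>c<n. z c) = 0" using assms unfolding cochar_lattice_def by auto
  show "z i = (\<Sum>c\<in>{..<n}. z c * vv c 0 i)"
  proof (cases "i < n")
    case True
    have "(\<Sum>c\<in>{..<n}. z c * vv c 0 i) = (\<Sum>c\<in>{..<n}. (if i = c then z c else 0))
       - (\<Sum>c\<in>{..<n}. (if i = 0 then z c else 0))"
      unfolding sum_subtractf[symmetric]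
      by (rule sum.cong) (auto simp: vv_def basis_vec_def)
    also have "\<dots> = z i" using True s by (cases "i = 0") (simp_all add: sum.delta)
    finally show ?thesis by simp
  next
    case False
    then show ?thesis using assms by (simp add: cochar_lattice_def vv_def basis_vec_def)
  qed
qed

lemma kappa_triv: assumes "is_character n \<kappa>" "\<forall>c<n. \<kappa> (vv c 0) = 1" "0 < n"
  "z \<in> cochar_lattice n" shows "\<kappa> z = 1"
  using kappa_sum1[OF assms(1-3), of "{..<n}" z] decomp[OF assms(4,3)] by simp

theorem lemma5p8:
  fixes n r :: nat and \<kappa> :: "(nat \<Rightarrow> int) \<Rightarrow> complex"
  assumes "prime (n::nat)"
    and "coprime r n"
    and "is_character n \<kappa>"
    and "\<forall>z\<in>cochar_lattice n. \<kappa> (\<lambda>i. cyc_shift n r z i - z i) = 1"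
    and "\<exists>z\<in>cochar_lattice n. \<kappa> z \<noteq> 1"
  shows "(\<exists>w. w permutes {..<n} \<and> (\<forall>z\<in>cochar_lattice n. cyc_shift n r z = z \<circ> w))
    \<and> (\<forall>z\<in>cochar_lattice n. \<kappa> (cyc_shift n r z) = \<kappa> z)
    \<and> {\<alpha>\<in>coroots n. \<kappa> \<alpha> = 1} = {}"
proof -
  have n0: "0 < n" using assms(1) prime_gt_0_nat by blast
  define w where "w = (\<lambda>i. if i < n then (i + r) mod n else i)"
  have inj: "inj_on w {..<n}"
  proof
    fix i j assume ij: "i \<in> {..<n}" "j \<in> {..<n}" "w i = w j"
    then have "[i + r = j + r] (mod n)" by (simp add: w_def cong_def)
    then have "[i = j] (mod n)" by (simp add: cong_add_rcancel_nat)
    then show "i = j" using ij cong_less_modulus_unique_nat by auto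
  qed
  have img: "w ` {..<n} = {..<n}"
    by (rule endo_inj_surj) (use inj n0 in \<open>auto simp: w_def\<close>)
  have wp: "w permutes {..<n}"
    by (rule bij_imp_permutes) (use inj img in \<open>auto simp: bij_betw_def w_def\<close>)
  have shiftw: "cyc_shift n r z = z \<circ> w" if "z \<in> cochar_lattice n" for z
    using that by (auto simp: cyc_shift_def w_def cochar_lattice_def)
  have shiftL: "cyc_shift n r z \<in> cochar_lattice n" if z: "z \<in> cochar_lattice n" for z
  proof -
    have "(\<Sum>i<n. z (w i)) = (\<Sum>i<n. z i)"
      using sum.reindex[OF inj, of z] img by simp
    then show ?thesis using z shiftw[OF z] by (simp add: cochar_lattice_def cyc_shift_def w_def)
  qed
  have P2: "\<kappa> (cyc_shift n r z) = \<kappa> z" if z: "z \<in> cochar_lattice n" for z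
  proof -
    have d: "(\<lambda>i. cyc_shift n r z i - z i) \<in> cochar_lattice n"
      using L_add[OF shiftL[OF z] L_neg[OF z]] by simp
    have "\<kappa> (\<lambda>i. (cyc_shift n r z i - z i) + z i) = \<kappa> (\<lambda>i. cyc_shift n r z i - z i) * \<kappa> z"
      using kmult[OF assms(3) d z] .
    then show ?thesis using assms(4) z by simp
  qed
  define R where "R = (\<lambda>x y. \<kappa> (vv (x mod n) (y mod n)) = 1)"
  have Rsym: "R y x" if "R x y" for x y
  proof -
    have "\<kappa> (\<lambda>i. - vv (x mod n) (y mod n) i) = 1"
      using kappa_neg1[OF assms(3) vv_L] that n0 by (simp add: R_def)
    moreover have "(\<lambda>i. - vv (x mod n) (y mod n) i) = vv (y mod n) (x mod n)"
      by (auto simp: vv_def)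
    ultimately show ?thesis by (simp add: R_def)
  qed
  have Rtrans: "R x z" if "R x y" "R y z" for x y z
  proof -
    have "\<kappa> (\<lambda>i. vv (x mod n) (y mod n) i + vv (y mod n) (z mod n) i) = 1"
      using kappa_add1[OF assms(3) vv_L vv_L] that n0 by (simp add: R_def)
    moreover have "(\<lambda>i. vv (x mod n) (y mod n) i + vv (y mod n) (z mod n) i) = vv (x mod n) (z mod n)"
      by (auto simp: vv_def)
    ultimately show ?thesis by (simp add: R_def)
  qed
  have Rmod: "R x y \<longleftrightarrow> R x' y'" if "x mod n = x' mod n" "y mod n = y' mod n" for x y x' y'
    using that by (simp add: R_def)
  have Rshift: "R (x + r) (y + r)" if "R x y" for x y
  proof -
    let ?c = "x mod n" and ?e = "y mod n"
    have "cyc_shift n r (vv ((?c + r) mod n) ((?e + r) mod n)) = vv ?c ?e"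
    proof
      fix i
      show "cyc_shift n r (vv ((?c + r) mod n) ((?e + r) mod n)) i = vv ?c ?e i"
      proof (cases "i < n")
        case True
        have eq: "((i + r) mod n = (u + r) mod n) \<longleftrightarrow> i = u" if "u < n" for u
        proof
          assume "(i + r) mod n = (u + r) mod n"
          then have "[i + r = u + r] (mod n)" by (simp add: cong_def)
          then have "[i = u] (mod n)" by (simp add: cong_add_rcancel_nat)
          then show "i = u" using True that cong_less_modulus_unique_nat by auto
        qed simp
        have "(i + r) mod n = ((x mod n + r) mod n) \<longleftrightarrow> i = x mod n" using eq n0 by simp
        moreover have "(i + r) mod n = ((y mod n + r) mod n) \<longleftrightarrow> i = y mod n" using eq n0 by simp
        ultimately show ?thesis using True by (simp add: cyc_shift_def vv_def basis_vec_def)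
      next
        case False
        then show ?thesis using n0
          by (auto simp: cyc_shift_def vv_def basis_vec_def dest: pos_mod_bound[of n x] )
      qed
    qed
    then have "\<kappa> (vv ((?c + r) mod n) ((?e + r) mod n)) = \<kappa> (vv ?c ?e)"
      using P2[OF vv_L[OF mod_less_divisor[OF n0, of "x mod n + r"] mod_less_divisor[OF n0, of "y mod n + r"]]] by simp
    then show ?thesis using that by (simp add: R_def mod_add_left_eq)
  qed
  have Rshiftk: "R (x + k * r) (y + k * r)" if "R x y" for x y k
  proof (induction k)
    case 0 then show ?case using that by simp
  next
    case (Suc k)
    have "x + Suc k * r = x + k * r + r" "y + Suc k * r = y + k * r + r" by simp_all
    then show ?case using Rshift[OF Suc] by (simp only:)
  qed
  obtain s where s: "[r * s = Suc 0] (mod n)" using cong_solve_coprime_nat[OF assms(2)] by blast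
  have Rtr: "R (x + t) (y + t)" if "R x y" for x y t
  proof -
    have "[(s * t) * r = t] (mod n)"
      using cong_mult[OF s cong_refl[of t]] by (simp add: algebra_simps)
    then have m: "((s*t) * r) mod n = t mod n" by (simp add: cong_def)
    have "(x + (s*t) * r) mod n = (x + t) mod n" "(y + (s*t) * r) mod n = (y + t) mod n"
      using mod_add_cong[OF refl m] by simp_all
    then show ?thesis using Rshiftk[OF that, of "s*t"] Rmod[of "x + (s*t) * r" "x + t" "y + (s*t) * r" "y + t"]
      by simp
  qed
  have P3: "{\<alpha>\<in>coroots n. \<kappa> \<alpha> = 1} = {}"
  proof (rule ccontr)
    assume "{\<alpha>\<in>coroots n. \<kappa> \<alpha> = 1} \<noteq> {}"
    then obtain a b where ab: "a < n" "b < n" "a \<noteq> b" "\<kappa> (vv a b) = 1"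
      unfolding coroots_def vv_def by blast
    have Rab: "R a b" using ab by (simp add: R_def)
    define d where "d = (b + (n - a)) mod n"
    have R0d: "R 0 d"
    proof -
      have "R (a + (n - a)) (b + (n - a))" using Rtr[OF Rab] .
      moreover have "a + (n - a) = n" using ab(1) by simp
      ultimately show ?thesis unfolding d_def by (simp add: R_def)
    qed
    have dn: "d < n" using n0 by (simp add: d_def)
    have d0: "d \<noteq> 0"
    proof
      assume "d = 0"
      then have "[b + (n - a) = a + (n - a)] (mod n)" using ab(1) by (simp add: d_def cong_def)
      then have "[b = a] (mod n)" by (simp add: cong_add_rcancel_nat)
      then show False using ab cong_less_modulus_unique_nat by auto
    qed
    have cd: "coprime d n"
    proof -
      have "\<not> n dvd d" using d0 dn by (auto dest: dvd_imp_le)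
      then show ?thesis using prime_imp_coprime[OF assms(1)] coprime_commute by blast
    qed
    have Rmd: "R 0 (m * d)" for m
    proof (induction m)
      case 0 then show ?case using kappa_zero[OF assms(3)] by (simp add: R_def vv_def)
    next
      case (Suc m)
      have "R d (m * d + d)" using Rtr[OF Suc, of d] by simp
      then show ?case using Rtrans[OF R0d] by (simp add: add.commute)
    qed
    obtain t where t: "[d * t = Suc 0] (mod n)" using cong_solve_coprime_nat[OF cd] by blast
    have R0x: "R 0 x" for x
    proof -
      have "[(t * x) * d = x] (mod n)"
        using cong_mult[OF t cong_refl[of x]] by (simp add: algebra_simps)
      then have "((t * x) * d) mod n = x mod n" by (simp add: cong_def)
      then show ?thesis using Rmd[of "t*x"] Rmod[of 0 0 "(t * x) * d" x] by simp
    qed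
    have "\<forall>c<n. \<kappa> (vv c 0) = 1"
    proof (intro allI impI)
      fix c assume "c < n"
      have "R c 0" using Rsym[OF R0x] .
      then show "\<kappa> (vv c 0) = 1" using \<open>c < n\<close> n0 by (simp add: R_def)
    qed
    then show False using kappa_triv[OF assms(3) _ n0] assms(5) by blast
  qed
  show ?thesis using wp shiftw P2 P3 by blast
qed

end
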